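(* Let $(L,\le,(\sqsubseteq_\alpha)_{\alpha<\kappa})$ be a model of Axioms 1–4, where $\kappa>0$ is an arbitrary ordinal. Let $f:L\to L$ be $\alpha$-monotonic for every ordinal $\alpha<\kappa$. Then $f$ has a least pre-fixed point with respect to $\sqsubseteq$, that is, an element $x$ with $f(x)\sqsubseteq x$ such that $x\sqsubseteq z$ whenever $f(z)\sqsubseteq z$. This element is also the least fixed point of $f$ with respect to $\sqsubseteq$.
   Context: Setting (model of Axioms 1–4). Let $(L,\le)$ be a complete lattice with join operation $\bigvee$ and least element $\perp$. Let $\kappa>0$ be an ordinal, and for each ordinal $\alpha<\kappa$ let $\sqsubseteq_\alpha$ be a preorder on $L$. Derived relations: - $x=_\alpha y$ means $x\sqsubseteq_\alpha y$ and $y\sqsubseteq_\alpha x$. - $x\sqsubset_\alpha y$ means $x\sqsubseteq_\alpha y$ and not $x=_\alpha y$. - $\sqsubset=\bigcup_{\alpha<\kappa}\sqsubset_\alpha$. - $x\sqsubseteq y$ means $x\sqsubset y$ or $x=y$. Derived set, for $x\in L$ and $\alpha<\kappa$: $(x]_\alpha=\{y\in L:\forall\beta<\alpha,\ x=_\beta y\}$. For a set $X$, $X\sqsubseteq_\alpha y$ means $x\sqsubseteq_\alpha y$ for all $x\in X$. The structure is a model of Axioms 1–4 if: - (A1) for all $\alpha<\beta<\kappa$, $x\sqsubseteq_\beta y$ implies $x=_\alpha y$; - (A2) $\bigcap_{\alpha<\kappa}=_\alpha$ is the identity relation on $L$; - (A3) for every $x\in L$, every $\alpha<\kappa$ and every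 $X\subseteq(x]_\alpha$ there is $y\in(x]_\alpha$ with $X\sqsubseteq_\alpha y$ such that for all $z\in(x]_\alpha$ with $X\sqsubseteq_\alpha z$ we have $y\sqsubseteq_\alpha z$ and $y\le z$; - (A4) for every nonempty $X\subseteq L$, every $\alpha<\kappa$ and every $y\in L$, if $y=_\alpha x$ for all $x\in X$ then $y=_\alpha\bigvee X$. A function $f:L\to L$ is $\alpha$-monotonic if $x\sqsubseteq_\alpha y$ implies $f(x)\sqsubseteq_\alpha f(y)$. *)

theory Defs
  imports Main
begin

text \<open>Ordinals below kappa (kappa > 0) are represented by the elements of a
  (nonempty) type 'i with a well-order; every nonempty well-ordered set is
  order-isomorphic to a nonzero ordinal and vice versa.
  R a x y stands for x \<sqsubseteq>_a y.\<close>

definition eq_at :: "('i \<Rightarrow> 'a \<Rightarrow> 'a \<Rightarrow> bool) \<Rightarrow> 'i \<Rightarrow> 'a \<Rightarrow> 'a \<Rightarrow> bool" where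
  "eq_at R a x y \<longleftrightarrow> R a x y \<and> R a y x"

definition lt_at :: "('i \<Rightarrow> 'a \<Rightarrow> 'a \<Rightarrow> bool) \<Rightarrow> 'i \<Rightarrow> 'a \<Rightarrow> 'a \<Rightarrow> bool" where
  "lt_at R a x y \<longleftrightarrow> R a x y \<and> \<not> eq_at R a x y"

definition lt_all :: "('i \<Rightarrow> 'a \<Rightarrow> 'a \<Rightarrow> bool) \<Rightarrow> 'a \<Rightarrow> 'a \<Rightarrow> bool" where
  "lt_all R x y \<longleftrightarrow> (\<exists>a. lt_at R a x y)"

definition le_all :: "('i \<Rightarrow> 'a \<Rightarrow> 'a \<Rightarrow> bool) \<Rightarrow> 'a \<Rightarrow> 'a \<Rightarrow> bool" where
  "le_all R x y \<longleftrightarrow> lt_all R x y \<or> x = y"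

definition down_at :: "('i::wellorder \<Rightarrow> 'a \<Rightarrow> 'a \<Rightarrow> bool) \<Rightarrow> 'a \<Rightarrow> 'i \<Rightarrow> 'a set" where
  "down_at R x a = {y. \<forall>b<a. eq_at R b x y}"

definition model_axioms :: "('i::wellorder \<Rightarrow> 'a::complete_lattice \<Rightarrow> 'a \<Rightarrow> bool) \<Rightarrow> bool" where
  "model_axioms R \<longleftrightarrow>
    (\<forall>a. (\<forall>x. R a x x) \<and> (\<forall>x y z. R a x y \<longrightarrow> R a y z \<longrightarrow> R a x z)) \<and>
    (\<forall>a b x y. a < b \<longrightarrow> R b x y \<longrightarrow> eq_at R a x y) \<and>
    (\<forall>x y. (\<forall>a. eq_at R a x y) \<longrightarrow> x = y) \<and>
    (\<forall>x a X. X \<subseteq> down_at R x a \<longrightarrow>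
       (\<exists>y\<in>down_at R x a. (\<forall>w\<in>X. R a w y) \<and>
          (\<forall>z\<in>down_at R x a. (\<forall>w\<in>X. R a w z) \<longrightarrow> R a y z \<and> y \<le> z))) \<and>
    (\<forall>X a y. X \<noteq> {} \<longrightarrow> (\<forall>x\<in>X. eq_at R a y x) \<longrightarrow> eq_at R a y (Sup X))"

definition mono_at :: "('i \<Rightarrow> 'a \<Rightarrow> 'a \<Rightarrow> bool) \<Rightarrow> 'i \<Rightarrow> ('a \<Rightarrow> 'a) \<Rightarrow> bool" where
  "mono_at R a f \<longleftrightarrow> (\<forall>x y. R a x y \<longrightarrow> R a (f x) (f y))"

end

theory Submission
  imports Defs
begin

definition Dset :: "('i::wellorder \<Rightarrow> 'a \<Rightarrow> 'a \<Rightarrow> bool) \<Rightarrow> ('i \<Rightarrow> 'a) \<Rightarrow> 'i \<Rightarrow> 'a set" where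
  "Dset R s a = {y. \<forall>b<a. eq_at R b (s b) y}"

definition Lb :: "('i \<Rightarrow> 'a \<Rightarrow> 'a \<Rightarrow> bool) \<Rightarrow> ('a \<Rightarrow> 'a) \<Rightarrow> 'a set \<Rightarrow> 'i \<Rightarrow> 'a set" where
  "Lb R f D a = {w\<in>D. \<forall>p\<in>D. R a (f p) p \<longrightarrow> R a w p}"

definition spec :: "('i \<Rightarrow> 'a \<Rightarrow> 'a \<Rightarrow> bool) \<Rightarrow> ('a \<Rightarrow> 'a) \<Rightarrow> 'a set \<Rightarrow> 'i \<Rightarrow> 'a::complete_lattice \<Rightarrow> bool" where
  "spec R f D a y \<longleftrightarrow> y \<in> D \<and> (\<forall>w\<in>Lb R f D a. R a w y) \<and>
     (\<forall>z\<in>D. (\<forall>w\<in>Lb R f D a. R a w z) \<longrightarrow> R a y z \<and> y \<le> z)"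

definition H :: "('i::wellorder \<Rightarrow> 'a \<Rightarrow> 'a \<Rightarrow> bool) \<Rightarrow> ('a \<Rightarrow> 'a) \<Rightarrow> ('i \<Rightarrow> 'a) \<Rightarrow> 'i \<Rightarrow> 'a::complete_lattice" where
  "H R f g a = (SOME y. spec R f (Dset R g a) a y)"

definition sq :: "('i::wellorder \<Rightarrow> 'a \<Rightarrow> 'a \<Rightarrow> bool) \<Rightarrow> ('a \<Rightarrow> 'a) \<Rightarrow> 'i \<Rightarrow> 'a::complete_lattice" where
  "sq R f = wfrec {(x,y). x < y} (H R f)"

lemma sq_eq: "sq R f a = (SOME y. spec R f (Dset R (sq R f) a) a y)"
proof -
  have "sq R f a = H R f (cut (sq R f) {(x,y). x < y} a) a"
    unfolding sq_def by (rule wfrec[OF wf])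
  moreover have "Dset R (cut (sq R f) {(x,y). x < y} a) a = Dset R (sq R f) a"
    unfolding Dset_def by (auto simp: cut_apply)
  ultimately show ?thesis by (simp add: H_def)
qed

locale M =
  fixes R :: "'i::wellorder \<Rightarrow> 'a::complete_lattice \<Rightarrow> 'a \<Rightarrow> bool" and f :: "'a \<Rightarrow> 'a"
  assumes ax: "model_axioms R" and mono: "\<And>a. mono_at R a f"
begin

lemma AX: "(\<forall>a. (\<forall>x. R a x x) \<and> (\<forall>x y z. R a x y \<longrightarrow> R a y z \<longrightarrow> R a x z))"
  "(\<forall>a b x y. a < b \<longrightarrow> R b x y \<longrightarrow> eq_at R a x y)"
  "(\<forall>x y. (\<forall>a. eq_at R a x y) \<longrightarrow> x = y)"
  "(\<forall>x a X. X \<subseteq> down_at R x a \<longrightarrow>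
       (\<exists>y\<in>down_at R x a. (\<forall>w\<in>X. R a w y) \<and>
          (\<forall>z\<in>down_at R x a. (\<forall>w\<in>X. R a w z) \<longrightarrow> R a y z \<and> y \<le> z)))"
  "(\<forall>X a y. X \<noteq> {} \<longrightarrow> (\<forall>x\<in>X. eq_at R a y x) \<longrightarrow> eq_at R a y (Sup X))"
  using ax unfolding model_axioms_def by simp_all

lemma rrefl: "R a x x" using AX(1) by simp
lemma rtrans: "R a x y \<Longrightarrow> R a y z \<Longrightarrow> R a x z" using AX(1) by metis
lemma A1: "a < b \<Longrightarrow> R b x y \<Longrightarrow> eq_at R a x y" using AX(2) by metis
lemma A2: "(\<And>a. eq_at R a x y) \<Longrightarrow> x = y" using AX(3) by metis
lemma A3: "X \<subseteq> down_at R x a \<Longrightarrow>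
       (\<exists>y\<in>down_at R x a. (\<forall>w\<in>X. R a w y) \<and>
          (\<forall>z\<in>down_at R x a. (\<forall>w\<in>X. R a w z) \<longrightarrow> R a y z \<and> y \<le> z))"
  using AX(4) by (elim allE impE) assumption+
lemma A4: "X \<noteq> {} \<Longrightarrow> (\<forall>x\<in>X. eq_at R a y x) \<Longrightarrow> eq_at R a y (Sup X)"
  using AX(5) by metis

lemma eq_refl: "eq_at R a x x" by (simp add: eq_at_def rrefl)
lemma eq_sym: "eq_at R a x y \<Longrightarrow> eq_at R a y x" by (simp add: eq_at_def)
lemma eq_trans: "eq_at R a x y \<Longrightarrow> eq_at R a y z \<Longrightarrow> eq_at R a x z"
  unfolding eq_at_def using rtrans by blast
lemma fmono: "R a x y \<Longrightarrow> R a (f x) (f y)" using mono unfolding mono_at_def by blast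
lemma f_eq: "eq_at R a x y \<Longrightarrow> eq_at R a (f x) (f y)" unfolding eq_at_def using fmono by blast

lemma down_eq: "u \<in> Dset R s a \<Longrightarrow> Dset R s a = down_at R u a"
  unfolding Dset_def down_at_def using eq_trans eq_sym by blast

lemma KT_ex: assumes "u \<in> D" "D = down_at R u a" shows "\<exists>y. spec R f D a y"
proof -
  have "Lb R f D a \<subseteq> down_at R u a" using assms unfolding Lb_def by auto
  from A3[OF this] show ?thesis unfolding spec_def using assms(2) by auto
qed

lemma KT_least: "spec R f D a y \<Longrightarrow> p \<in> D \<Longrightarrow> R a (f p) p \<Longrightarrow> R a y p"
  unfolding spec_def Lb_def by auto

lemma KT_fix: assumes sp: "spec R f D a y" and cl: "\<forall>x\<in>D. f x \<in> D"
  shows "eq_at R a (f y) y"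
proof -
  have yD: "y \<in> D" using sp unfolding spec_def by auto
  have "f y \<in> Lb R f D a"
    unfolding Lb_def using yD cl KT_least[OF sp] fmono rtrans by blast
  hence 1: "R a (f y) y" using sp unfolding spec_def by auto
  have "R a y (f y)" using KT_least[OF sp, of "f y"] cl yD fmono[OF 1] by auto
  with 1 show ?thesis by (simp add: eq_at_def)
qed

abbreviation "s \<equiv> sq R f"

definition good where
  "good b \<longleftrightarrow> spec R f (Dset R s b) b (s b) \<and> eq_at R b (f (s b)) (s b)"

lemma spec_mem: "spec R f D a y \<Longrightarrow> y \<in> D" unfolding spec_def by simp
lemma spec_ub: "spec R f D a y \<Longrightarrow> z \<in> D \<Longrightarrow> (\<And>w. w \<in> Lb R f D a \<Longrightarrow> R a w z) \<Longrightarrow> y \<le> z"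
  unfolding spec_def by blast
lemma spec_lb: "spec R f D a y \<Longrightarrow> w \<in> Lb R f D a \<Longrightarrow> R a w y"
  unfolding spec_def by blast

lemma good_mem: "good b \<Longrightarrow> s b \<in> Dset R s b" unfolding good_def using spec_mem by blast

lemma good_le: assumes gb: "good b" and gc: "good c" and bc: "b < c" shows "s b \<le> s c"
proof -
  have "s c \<in> Dset R s b" using good_mem[OF gc] bc unfolding Dset_def by auto
  moreover have "eq_at R b (s b) (s c)" using good_mem[OF gc] bc unfolding Dset_def by auto
  moreover have sp: "spec R f (Dset R s b) b (s b)" using gb unfolding good_def by simp
  ultimately show ?thesis
  proof (intro spec_ub[OF sp])
    fix w assume "w \<in> Lb R f (Dset R s b) b"
    hence "R b w (s b)" by (rule spec_lb[OF sp])
    moreover have "R b (s b) (s c)" using \<open>eq_at R b (s b) (s c)\<close> unfolding eq_at_def by simp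
    ultimately show "R b w (s c)" by (rule rtrans)
  qed auto
qed

lemma sup_lem: assumes g: "\<forall>b\<in>B. good b" and bB: "b \<in> B"
  shows "eq_at R b (s b) (Sup (s ` B))"
proof -
  let ?X = "s ` {c\<in>B. b \<le> c}"
  have "eq_at R b (s b) (Sup ?X)"
  proof (rule A4)
    show "?X \<noteq> {}" using bB by auto
    show "\<forall>x\<in>?X. eq_at R b (s b) x"
    proof
      fix x assume "x \<in> ?X"
      then obtain c where c: "c \<in> B" "b \<le> c" "x = s c" by auto
      show "eq_at R b (s b) x"
      proof (cases "b = c")
        case True thus ?thesis using c eq_refl by simp
      next
        case False
        hence "b < c" using c by auto
        have "s c \<in> Dset R s c" using good_mem[of c] g c by blast
        thus ?thesis using \<open>b < c\<close> c(3) unfolding Dset_def by simp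
      qed
    qed
  qed
  moreover have "Sup ?X = Sup (s ` B)"
  proof (rule antisym)
    show "Sup ?X \<le> Sup (s ` B)" by (rule Sup_subset_mono) blast
    show "Sup (s ` B) \<le> Sup ?X"
    proof (rule Sup_least)
      fix x assume "x \<in> s ` B"
      then obtain c where c: "c \<in> B" "x = s c" by auto
      show "x \<le> Sup ?X"
      proof (cases "b \<le> c")
        case True thus ?thesis using c by (auto intro: Sup_upper)
      next
        case False
        hence "c < b" by auto
        hence "s c \<le> s b" using good_le g c bB by auto
        also have "s b \<le> Sup ?X" using bB by (auto intro: Sup_upper)
        finally show ?thesis using c by simp
      qed
    qed
  qed
  ultimately show ?thesis by simp
qed

lemma all_good: "good a"
proof (induction a rule: less_induct)
  case (less a)
  let ?y = "Sup (s ` {b. b < a})"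
  have yD: "?y \<in> Dset R s a" unfolding Dset_def using sup_lem[of "{b. b < a}"] less by auto
  have cl: "\<forall>x\<in>Dset R s a. f x \<in> Dset R s a"
  proof
    fix x assume "x \<in> Dset R s a"
    show "f x \<in> Dset R s a" unfolding Dset_def
    proof (intro CollectI allI impI)
      fix b assume "b < a"
      have 1: "eq_at R b (s b) x" using \<open>x \<in> Dset R s a\<close> \<open>b < a\<close> unfolding Dset_def by auto
      have 2: "eq_at R b (f (s b)) (s b)" using less \<open>b < a\<close> unfolding good_def by auto
      show "eq_at R b (s b) (f x)" using eq_trans[OF eq_sym[OF 2] f_eq[OF 1]] .
    qed
  qed
  obtain y where "spec R f (Dset R s a) a y" using KT_ex[OF yD down_eq[OF yD]] by blast
  hence sp: "spec R f (Dset R s a) a (s a)" using sq_eq[of R f a] by (metis someI)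
  show ?case unfolding good_def using sp KT_fix[OF sp cl] by simp
qed

lemma main:
  "\<exists>x. le_all R (f x) x \<and> (\<forall>z. le_all R (f z) z \<longrightarrow> le_all R x z)
             \<and> f x = x \<and> (\<forall>z. f z = z \<longrightarrow> le_all R x z)"
proof -
  define x where "x = Sup (range s)"
  have xe: "\<And>b. eq_at R b (s b) x" unfolding x_def using sup_lem[of UNIV] all_good by auto
  have fx: "f x = x"
  proof (rule A2)
    fix b
    have 1: "eq_at R b (f x) (f (s b))" using f_eq[OF eq_sym[OF xe]] .
    have 2: "eq_at R b (f (s b)) (s b)" using all_good unfolding good_def by auto
    show "eq_at R b (f x) x" using eq_trans[OF eq_trans[OF 1 2] xe] .
  qed
  have least: "le_all R x z" if pz: "le_all R (f z) z" for z
  proof (cases "z = x")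
    case True thus ?thesis by (simp add: le_all_def)
  next
    case False
    hence "\<exists>b. \<not> eq_at R b z x" using A2 by blast
    define a where "a = (LEAST b. \<not> eq_at R b z x)"
    have na: "\<not> eq_at R a z x" unfolding a_def using \<open>\<exists>b. _\<close> by (metis LeastI)
    have below: "\<And>b. b < a \<Longrightarrow> eq_at R b z x" unfolding a_def using not_less_Least by blast
    have zD: "z \<in> Dset R s a" unfolding Dset_def
      using eq_trans[OF xe eq_sym[OF below]] by blast
    have pre: "R a (f z) z"
    proof (cases "f z = z")
      case True thus ?thesis using rrefl by simp
    next
      case False
      then obtain c where c: "lt_at R c (f z) z" using pz unfolding le_all_def lt_all_def by auto
      show ?thesis
      proof (cases "a < c")
        case True
        have "R c (f z) z" using c unfolding lt_at_def by simp
        thus ?thesis using A1[OF True] unfolding eq_at_def by blast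
      next
        case False
        show ?thesis
        proof (cases "c = a")
          case True thus ?thesis using c unfolding lt_at_def by simp
        next
          case False
          hence ca: "c < a" using \<open>\<not> a < c\<close> by auto
          have "eq_at R c z (s c)" using eq_trans[OF below[OF ca] eq_sym[OF xe]] .
          hence "eq_at R c (f z) (f (s c))" by (rule f_eq)
          moreover have "eq_at R c (f (s c)) (s c)" using all_good unfolding good_def by auto
          ultimately have "eq_at R c (f z) z"
            using eq_trans[OF eq_trans eq_sym[OF \<open>eq_at R c z (s c)\<close>]] by blast
          thus ?thesis using c unfolding lt_at_def by simp
        qed
      qed
    qed
    have "R a (s a) z" using KT_least[OF _ zD pre] all_good unfolding good_def by auto
    moreover have "R a x (s a)" using xe[of a] unfolding eq_at_def by simp
    ultimately have "R a x z" using rtrans by blast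
    moreover have "\<not> R a z x" using na \<open>R a x z\<close> unfolding eq_at_def by blast
    ultimately show ?thesis unfolding le_all_def lt_all_def lt_at_def eq_at_def by blast
  qed
  show ?thesis
    apply (rule exI[of _ x])
    using fx least by (simp add: le_all_def)
qed

end

theorem mainTheorem2:
  fixes R :: "'i::wellorder \<Rightarrow> 'a::complete_lattice \<Rightarrow> 'a \<Rightarrow> bool"
    and f :: "'a \<Rightarrow> 'a"
  assumes "model_axioms R"
    and "\<And>a. mono_at R a f"
  shows "\<exists>x. le_all R (f x) x \<and> (\<forall>z. le_all R (f z) z \<longrightarrow> le_all R x z)
             \<and> f x = x \<and> (\<forall>z. f z = z \<longrightarrow> le_all R x z)"
proof -
  interpret M R f using assms by unfold_locales
  show ?thesis by (rule main)
qed

end
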